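(* If $\mathbb{K}=(K,+,0)$ is a positive commutative monoid that is weakly cancellative and totally canonically pre-ordered, then $\mathbb{K}$ has the transportation property.
   Context: Positive: $p+q=0$ implies $p=q=0$. The canonical pre-order: $b\sqsubseteq c$ iff $b+a=c$ for some $a\in K$. Weakly cancellative: $a+b=a+c$ implies $b=c$ or $b=0$ or $c=0$. Totally canonically pre-ordered: for all $b,c$, $b\sqsubseteq c$ or $c\sqsubseteq b$. Transportation property: for all positive integers $m,n$ and all $b\in K^m$, $c\in K^n$ with $b_1+\dots+b_m=c_1+\dots+c_n$, there exists $(d_{ij})\in K^{m\times n}$ with $\sum_{j}d_{ij}=b_i$ for all $i\in[m]$ and $\sum_i d_{ij}=c_j$ for all $j\in[n]$. *)

theory Defs
  imports Main
begin

definition positive_monoid :: "'a::comm_monoid_add itself \<Rightarrow> bool" where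
  "positive_monoid _ \<longleftrightarrow> (\<forall>p q :: 'a. p + q = 0 \<longrightarrow> p = 0 \<and> q = 0)"

definition canon_le :: "'a::comm_monoid_add \<Rightarrow> 'a \<Rightarrow> bool" where
  "canon_le b c \<longleftrightarrow> (\<exists>a. b + a = c)"

definition weakly_cancellative :: "'a::comm_monoid_add itself \<Rightarrow> bool" where
  "weakly_cancellative _ \<longleftrightarrow>
     (\<forall>a b c :: 'a. a + b = a + c \<longrightarrow> b = c \<or> b = 0 \<or> c = 0)"

definition totally_canon_preordered :: "'a::comm_monoid_add itself \<Rightarrow> bool" where
  "totally_canon_preordered _ \<longleftrightarrow> (\<forall>b c :: 'a. canon_le b c \<or> canon_le c b)"

definition transportation_property :: "'a::comm_monoid_add itself \<Rightarrow> bool" where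
  "transportation_property _ \<longleftrightarrow>
     (\<forall>(m::nat) (n::nat) (b::nat \<Rightarrow> 'a) (c::nat \<Rightarrow> 'a).
        0 < m \<longrightarrow> 0 < n \<longrightarrow> (\<Sum>i<m. b i) = (\<Sum>j<n. c j) \<longrightarrow>
        (\<exists>d :: nat \<Rightarrow> nat \<Rightarrow> 'a.
           (\<forall>i<m. (\<Sum>j<n. d i j) = b i) \<and> (\<forall>j<n. (\<Sum>i<m. d i j) = c j)))"

end

theory Submission
  imports Defs
begin

definition is_tp :: "nat set \<Rightarrow> nat set \<Rightarrow> (nat \<Rightarrow> 'a::comm_monoid_add) \<Rightarrow> (nat \<Rightarrow> 'a) \<Rightarrow> (nat \<Rightarrow> nat \<Rightarrow> 'a) \<Rightarrow> bool" where
  "is_tp I J b c d \<longleftrightarrow> (\<forall>i\<in>I. sum (d i) J = b i) \<and> (\<forall>j\<in>J. (\<Sum>i\<in>I. d i j) = c j)"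

lemma pos_sum0:
  fixes f :: "nat \<Rightarrow> 'a::comm_monoid_add"
  assumes pos: "\<forall>p q::'a. p + q = 0 \<longrightarrow> p = 0 \<and> q = 0"
    and "finite A" "sum f A = 0" "x \<in> A"
  shows "f x = 0"
  using assms(2,3,4)
proof (induction A rule: finite_induct)
  case empty then show ?case by simp
next
  case (insert y F)
  then have "f y + sum f F = 0" by simp
  then have "f y = 0 \<and> sum f F = 0" using pos by blast
  then show ?case using insert by auto
qed

lemma step:
  fixes b c :: "nat \<Rightarrow> 'a::comm_monoid_add"
  assumes pos: "\<forall>p q::'a. p + q = 0 \<longrightarrow> p = 0 \<and> q = 0"
    and wc: "\<forall>a b c :: 'a. a + b = a + c \<longrightarrow> b = c \<or> b = 0 \<or> c = 0"
    and IH: "\<And>I' J' (b'::nat \<Rightarrow> 'a) c'. finite I' \<Longrightarrow> finite J' \<Longrightarrow> card I' + card J' < card I + card J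
        \<Longrightarrow> sum b' I' = sum c' J' \<Longrightarrow> \<exists>d. is_tp I' J' b' c' d"
    and fI: "finite I" and fJ: "finite J" and i0: "i0 \<in> I" and j0: "j0 \<in> J"
    and ba: "b i0 + a = c j0" and eq: "sum b I = sum c J"
  shows "\<exists>d. is_tp I J b c d"
proof -
  define I' where "I' = I - {i0}"
  define c' where "c' = c(j0 := a)"
  have s1: "sum b I = b i0 + sum b I'" unfolding I'_def using fI i0 by (simp add: sum.remove)
  have s2: "sum c J = c j0 + sum c (J - {j0})" using fJ j0 by (simp add: sum.remove)
  have s3: "sum c' J = a + sum c (J - {j0})"
  proof -
    have "sum c' J = c' j0 + sum c' (J - {j0})" using fJ j0 by (simp add: sum.remove)
    also have "sum c' (J - {j0}) = sum c (J - {j0})" by (rule sum.cong) (auto simp: c'_def)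
    finally show ?thesis by (simp add: c'_def)
  qed
  have "b i0 + sum b I' = b i0 + sum c' J" using s1 s2 s3 eq ba by (metis add.assoc)
  then have "sum b I' = sum c' J \<or> sum b I' = 0 \<or> sum c' J = 0" using wc by blast
  moreover {
    assume h: "sum b I' = sum c' J"
    have "card I' + card J < card I + card J" unfolding I'_def using fI i0
      by (simp add: card_Diff_singleton) (metis card_gt_0_iff diff_Suc_less empty_iff)
    then obtain d' where d': "is_tp I' J b c' d'" using IH[of I' J b c'] h fI fJ unfolding I'_def by auto
    define d where "d = d'(i0 := (\<lambda>j. if j = j0 then b i0 else 0))"
    have "is_tp I J b c d"
      unfolding is_tp_def
    proof (intro conjI ballI)
      fix i assume "i \<in> I"
      show "sum (d i) J = b i"
      proof (cases "i = i0")
        case True then show ?thesis using fJ j0 by (simp add: d_def)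
      next
        case False then show ?thesis using d' \<open>i \<in> I\<close> by (simp add: d_def is_tp_def I'_def)
      qed
    next
      fix j assume j: "j \<in> J"
      have "(\<Sum>i\<in>I. d i j) = d i0 j + (\<Sum>i\<in>I'. d i j)" unfolding I'_def using fI i0 by (simp add: sum.remove)
      also have "(\<Sum>i\<in>I'. d i j) = (\<Sum>i\<in>I'. d' i j)" by (rule sum.cong) (auto simp: d_def I'_def)
      also have "\<dots> = c' j" using d' j by (simp add: is_tp_def)
      finally show "(\<Sum>i\<in>I. d i j) = c j" using ba by (simp add: d_def c'_def)
    qed
    then have ?thesis by blast
  }
  moreover {
    assume h: "sum b I' = 0"
    have z: "\<And>i. i \<in> I' \<Longrightarrow> b i = 0" using pos_sum0[OF pos] h fI unfolding I'_def by blast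
    define d where "d = (\<lambda>i j. if i = i0 then c j else 0::'a)"
    have "is_tp I J b c d"
      unfolding is_tp_def
    proof (intro conjI ballI)
      fix i assume "i \<in> I"
      then show "sum (d i) J = b i" using z[of i] s1 h eq by (cases "i = i0") (simp_all add: d_def I'_def)
    next
      fix j assume j: "j \<in> J"
      show "(\<Sum>i\<in>I. d i j) = c j" using fI i0 by (simp add: d_def)
    qed
    then have ?thesis by blast
  }
  moreover {
    assume h: "sum c' J = 0"
    have z: "\<And>j. j \<in> J \<Longrightarrow> c' j = 0" using pos_sum0[OF pos] h fJ by blast
    have z2: "\<And>j. j \<in> J - {j0} \<Longrightarrow> c j = 0" using z unfolding c'_def by (metis DiffD1 DiffD2 fun_upd_other singletonI)
    have sc: "sum c (J - {j0}) = 0" using z2 by simp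
    define d where "d = (\<lambda>i j. if j = j0 then b i else 0::'a)"
    have "is_tp I J b c d"
      unfolding is_tp_def
    proof (intro conjI ballI)
      fix i assume "i \<in> I"
      show "sum (d i) J = b i" using fJ j0 by (simp add: d_def)
    next
      fix j assume j: "j \<in> J"
      show "(\<Sum>i\<in>I. d i j) = c j"
      proof (cases "j = j0")
        case True then show ?thesis using eq s2 sc by (simp add: d_def)
      next
        case False then show ?thesis using z2 j by (simp add: d_def)
      qed
    qed
    then have ?thesis by blast
  }
  ultimately show ?thesis by meson
qed

lemma transp_gen:
  fixes b c :: "nat \<Rightarrow> 'a::comm_monoid_add"
  assumes pos: "\<forall>p q::'a. p + q = 0 \<longrightarrow> p = 0 \<and> q = 0"
    and wc: "\<forall>a b c :: 'a. a + b = a + c \<longrightarrow> b = c \<or> b = 0 \<or> c = 0"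
    and tot: "\<forall>b c :: 'a. (\<exists>a. b + a = c) \<or> (\<exists>a. c + a = b)"
  shows "finite I \<Longrightarrow> finite J \<Longrightarrow> sum b I = sum c J \<Longrightarrow> \<exists>d. is_tp I J b c d"
proof (induction "card I + card J" arbitrary: I J b c rule: less_induct)
  case (less I J b c)
  show ?case
  proof (cases "I = {} \<or> J = {}")
    case True
    then show ?thesis
    proof
      assume "I = {}"
      then have "sum c J = 0" using less.prems(3) by simp
      then have "\<And>j. j \<in> J \<Longrightarrow> c j = 0" using pos_sum0[OF pos less.prems(2)] by blast
      then have "is_tp I J b c (\<lambda>_ _. 0)" using \<open>I = {}\<close> by (simp add: is_tp_def)
      then show ?thesis by blast
    next
      assume "J = {}"
      then have "sum b I = 0" using less.prems(3) by simp
      then have "\<And>i. i \<in> I \<Longrightarrow> b i = 0" using pos_sum0[OF pos less.prems(1)] by blast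
      then have "is_tp I J b c (\<lambda>_ _. 0)" using \<open>J = {}\<close> by (simp add: is_tp_def)
      then show ?thesis by blast
    qed
  next
    case False
    then obtain i0 j0 where i0: "i0 \<in> I" and j0: "j0 \<in> J" by blast
    from tot consider (A) a where "b i0 + a = c j0" | (B) a where "c j0 + a = b i0" by blast
    then show ?thesis
    proof cases
      case A
      show ?thesis
      proof (rule step[OF pos wc _ less.prems(1,2) i0 j0 A less.prems(3)])
        fix I' J' :: "nat set" and b' c' :: "nat \<Rightarrow> 'a" assume h: "finite I'" "finite J'" "card I' + card J' < card I + card J" "sum b' I' = sum c' J'"
        show "\<exists>d. is_tp I' J' b' c' d" using less.hyps[OF h(3) h(1) h(2) h(4)] .
      qed
    next
      case B
      have "\<exists>d. is_tp J I c b d"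
      proof (rule step[OF pos wc _ less.prems(2,1) j0 i0 B less.prems(3)[symmetric]])
        fix I' J' :: "nat set" and b' c' :: "nat \<Rightarrow> 'a" assume h: "finite I'" "finite J'" "card I' + card J' < card J + card I" "sum b' I' = sum c' J'"
        have h3: "card I' + card J' < card I + card J" using h(3) by simp
        show "\<exists>d. is_tp I' J' b' c' d" using less.hyps[OF h3 h(1) h(2) h(4)] .
      qed
      then obtain d where "is_tp J I c b d" by blast
      then have "is_tp I J b c (\<lambda>i j. d j i)" by (auto simp: is_tp_def)
      then show ?thesis by blast
    qed
  qed
qed

theorem proposition23:
  assumes "positive_monoid TYPE('a::comm_monoid_add)"
    and "weakly_cancellative TYPE('a)"
    and "totally_canon_preordered TYPE('a)"
  shows "transportation_property TYPE('a)"
proof -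
  have pos: "\<forall>p q::'a. p + q = 0 \<longrightarrow> p = 0 \<and> q = 0" using assms(1) unfolding positive_monoid_def by blast
  have wc: "\<forall>a b c :: 'a. a + b = a + c \<longrightarrow> b = c \<or> b = 0 \<or> c = 0" using assms(2) unfolding weakly_cancellative_def by blast
  have tot: "\<forall>b c :: 'a. (\<exists>a. b + a = c) \<or> (\<exists>a. c + a = b)" using assms(3) unfolding totally_canon_preordered_def canon_le_def by blast
  show ?thesis unfolding transportation_property_def
  proof (intro allI impI)
    fix m n :: nat and b c :: "nat \<Rightarrow> 'a"
    assume "0 < m" "0 < n" and e: "(\<Sum>i<m. b i) = (\<Sum>j<n. c j)"
    have "\<exists>d. is_tp {..<m} {..<n} b c d"
      by (rule transp_gen[OF pos wc tot]) (simp_all add: e)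
    then obtain d where d: "is_tp {..<m} {..<n} b c d" by blast
    have "(\<forall>i<m. (\<Sum>j<n. d i j) = b i) \<and> (\<forall>j<n. (\<Sum>i<m. d i j) = c j)"
      using d unfolding is_tp_def by simp
    then show "\<exists>d. (\<forall>i<m. (\<Sum>j<n. d i j) = b i) \<and> (\<forall>j<n. (\<Sum>i<m. d i j) = c j)"
      by blast
  qed
qed

end
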